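(* Let $f$ be a quadratic rational map. Then there exists $k\in\mathbb{N}$ such that $\mathrm{Deck}(f^k)$ is a cyclic group of order greater than $2$ if and only if $f$ is a power map.
   Context: $\mathrm{Deck}(F)=\{\tau \text{ Möbius} : F\circ\tau=F\}$; $f^k$ is the $k$-th iterate. A power map is a rational map Möbius-conjugate to $z\mapsto z^2$ or $z\mapsto z^{-2}$ (equivalently, a quadratic map whose set of critical points equals its set of critical values). *)

theory Defs
  imports "HOL-Computational_Algebra.Polynomial_Factorial" "HOL-Analysis.Analysis"
begin

text \<open>The Riemann sphere: None is the point at infinity.\<close>
type_synonym sphere = "complex option"

definition rat_eval :: "complex poly \<Rightarrow> complex poly \<Rightarrow> sphere \<Rightarrow> sphere" where
  "rat_eval p q w = (case w of
      Some z \<Rightarrow> (if poly q z = 0 then None else Some (poly p z / poly q z))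
    | None \<Rightarrow> (if degree p > degree q then None
               else if degree p = degree q then Some (lead_coeff p / lead_coeff q)
               else Some 0))"

definition rational_map_deg :: "(sphere \<Rightarrow> sphere) \<Rightarrow> nat \<Rightarrow> bool" where
  "rational_map_deg f d \<longleftrightarrow> (\<exists>p q. q \<noteq> 0 \<and> coprime p q \<and>
       max (degree p) (degree q) = d \<and> f = rat_eval p q)"

definition quadratic_map :: "(sphere \<Rightarrow> sphere) \<Rightarrow> bool" where
  "quadratic_map f \<longleftrightarrow> rational_map_deg f 2"

definition moebius :: "(sphere \<Rightarrow> sphere) \<Rightarrow> bool" where
  "moebius \<tau> \<longleftrightarrow> rational_map_deg \<tau> 1"

definition Deck :: "(sphere \<Rightarrow> sphere) \<Rightarrow> (sphere \<Rightarrow> sphere) set" where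
  "Deck F = {\<tau>. moebius \<tau> \<and> F \<circ> \<tau> = F}"

definition cyclic_order_gt2 :: "(sphere \<Rightarrow> sphere) set \<Rightarrow> bool" where
  "cyclic_order_gt2 G \<longleftrightarrow> finite G \<and> card G > 2 \<and>
     (\<exists>g\<in>G. G = {g ^^ n | n. True})"

definition sq_map :: "sphere \<Rightarrow> sphere" where
  "sq_map = rat_eval [:0, 0, 1:] [:1:]"

definition inv_sq_map :: "sphere \<Rightarrow> sphere" where
  "inv_sq_map = rat_eval [:1:] [:0, 0, 1:]"

definition power_map :: "(sphere \<Rightarrow> sphere) \<Rightarrow> bool" where
  "power_map f \<longleftrightarrow> (\<exists>\<mu>. moebius \<mu> \<and>
      (f \<circ> \<mu> = \<mu> \<circ> sq_map \<or> f \<circ> \<mu> = \<mu> \<circ> inv_sq_map))"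

end

theory Submission
  imports Defs "HOL-Computational_Algebra.Fundamental_Theorem_Algebra"
begin
definition proj :: "complex \<Rightarrow> complex \<Rightarrow> sphere" where
  "proj x y = (if y = 0 then None else Some (x / y))"
definition rx :: "sphere \<Rightarrow> complex" where
  "rx w = (case w of None \<Rightarrow> 1 | Some z \<Rightarrow> z)"
definition ry :: "sphere \<Rightarrow> complex" where
  "ry w = (case w of None \<Rightarrow> 0 | Some z \<Rightarrow> 1)"
definition mob :: "complex \<Rightarrow> complex \<Rightarrow> complex \<Rightarrow> complex \<Rightarrow> sphere \<Rightarrow> sphere" where
  "mob a b c d w = proj (a * rx w + b * ry w) (c * rx w + d * ry w)"
definition homf :: "complex poly \<Rightarrow> nat \<Rightarrow> complex \<Rightarrow> complex \<Rightarrow> complex" where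
  "homf p d x y = (\<Sum>i\<le>d. coeff p i * x ^ i * y ^ (d - i))"

lemma proj_rep[simp]: "proj (rx w) (ry w) = w"
  by (cases w) (auto simp: proj_def rx_def ry_def)

lemma rep_nz: "rx w \<noteq> 0 \<or> ry w \<noteq> 0"
  by (cases w) (auto simp: rx_def ry_def)

lemma proj_scale: "k \<noteq> 0 \<Longrightarrow> proj (k * x) (k * y) = proj x y"
  by (auto simp: proj_def)

lemma proj_eq:
  assumes "x \<noteq> 0 \<or> y \<noteq> 0" "x' \<noteq> 0 \<or> y' \<noteq> 0"
  shows "proj x y = proj x' y' \<longleftrightarrow> x * y' = y * x'"
  using assms by (auto simp: proj_def field_simps)

lemma proj_None: "proj x y = None \<longleftrightarrow> y = 0"
  by (auto simp: proj_def)

lemma proj_Some: "proj x y = Some z \<longleftrightarrow> y \<noteq> 0 \<and> z = x / y"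
  by (auto simp: proj_def)

lemma rep_of_proj:
  assumes "x \<noteq> 0 \<or> y \<noteq> 0"
  shows "\<exists>k. k \<noteq> 0 \<and> x = k * rx (proj x y) \<and> y = k * ry (proj x y)"
proof (cases "y = 0")
  case True then show ?thesis using assms by (auto simp: proj_def rx_def ry_def)
next
  case False then show ?thesis by (auto simp: proj_def rx_def ry_def intro!: exI[of _ y])
qed

lemma homf_Some:
  assumes "degree p \<le> d"
  shows "homf p d z 1 = poly p z"
proof -
  have "homf p d z 1 = (\<Sum>i\<le>d. coeff p i * z ^ i)" by (simp add: homf_def)
  also have "\<dots> = (\<Sum>i\<le>degree p. coeff p i * z ^ i)"
    by (rule sum.mono_neutral_right) (use assms in \<open>auto simp: coeff_eq_0\<close>)
  also have "\<dots> = poly p z" by (simp add: poly_altdef)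
  finally show ?thesis .
qed

lemma homf_None: "homf p d 1 0 = coeff p d"
proof -
  have "homf p d 1 0 = (\<Sum>i\<le>d. if i = d then coeff p i else 0)"
    unfolding homf_def by (rule sum.cong) auto
  also have "\<dots> = coeff p d" by simp
  finally show ?thesis .
qed

lemma rat_eval_hom:
  assumes q: "q \<noteq> 0" and d: "max (degree p) (degree q) = d"
  shows "rat_eval p q w = proj (homf p d (rx w) (ry w)) (homf q d (rx w) (ry w))"
proof (cases w)
  case None
  then show ?thesis using q d
    by (auto simp: rat_eval_def rx_def ry_def homf_None proj_def coeff_eq_0 max_def
        split: if_splits)
next
  case (Some z)
  then show ?thesis using d
    by (auto simp: rat_eval_def rx_def ry_def homf_Some proj_def)
qed

lemma homf2: "homf p 2 x y = coeff p 2 * x^2 + coeff p 1 * x * y + coeff p 0 * y^2"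
  by (simp add: homf_def numeral_2_eq_2 algebra_simps)
lemma homf1: "homf p 1 x y = coeff p 1 * x + coeff p 0 * y"
  by (simp add: homf_def algebra_simps)
lemma homf1': "homf p (Suc 0) x y = coeff p 1 * x + coeff p 0 * y"
  using homf1 by simp

lemma coprime_of_noroot:
  fixes p q :: "complex poly"
  assumes "\<And>z. poly p z \<noteq> 0 \<or> poly q z \<noteq> 0"
  shows "coprime p q"
proof (rule coprimeI)
  fix r assume rp: "r dvd p" and rq: "r dvd q"
  have r0: "r \<noteq> 0"
  proof
    assume "r = 0" then have "p = 0" "q = 0" using rp rq by auto
    then show False using assms[of 0] by simp
  qed
  show "is_unit r"
  proof (cases "degree r = 0")
    case True
    then obtain c where c: "r = [:c:]" by (metis degree_eq_zeroE)
    with r0 have "c \<noteq> 0" by auto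
    then show ?thesis using c by (simp add: is_unit_const_poly_iff dvd_field_iff)
  next
    case False
    then have "\<not> constant (poly r)" by (simp add: constant_degree)
    then obtain z where "poly r z = 0" using fundamental_theorem_of_algebra by blast
    then have "[:-z, 1:] dvd r" by (simp add: poly_eq_0_iff_dvd)
    then have "[:-z, 1:] dvd p" "[:-z, 1:] dvd q" using rp rq by (auto intro: dvd_trans)
    then have "poly p z = 0" "poly q z = 0" by (simp_all add: poly_eq_0_iff_dvd)
    then show ?thesis using assms[of z] by simp
  qed
qed

lemma mob_proj:
  assumes "x \<noteq> 0 \<or> y \<noteq> 0"
  shows "mob a b c d (proj x y) = proj (a * x+b * y) (c * x+d * y)"
proof -
  obtain k where k: "k \<noteq> 0" "x = k * rx (proj x y)" "y = k * ry (proj x y)"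
    using rep_of_proj[OF assms] by blast
  define X where "X = rx (proj x y)"
  define Y where "Y = ry (proj x y)"
  have xX: "x = k * X" "y = k * Y" using k(2,3) unfolding X_def Y_def by simp_all
  have "mob a b c d (proj x y) = proj (a * X+b * Y) (c * X+d * Y)" by (simp add: mob_def X_def Y_def)
  also have "\<dots> = proj (k *(a * X+b * Y)) (k *(c * X+d * Y))" using k(1) by (simp add: proj_scale)
  also have "\<dots> = proj (a * x+b * y) (c * x+d * y)" unfolding xX by (simp add: algebra_simps)
  finally show ?thesis .
qed

lemma lin_nz:
  assumes "a * d - b * c \<noteq> (0::complex)" "x \<noteq> 0 \<or> y \<noteq> 0"
  shows "a * x+b * y \<noteq> 0 \<or> c * x+d * y \<noteq> 0"
proof (rule ccontr)
  assume "\<not> ?thesis"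
  then have e: "a * x+b * y = 0" "c * x+d * y = 0" by auto
  have "(a * d-b * c)* x = d *(a * x+b * y) - b *(c * x+d * y)" by (simp add: algebra_simps)
  moreover have "(a * d-b * c)* y = a *(c * x+d * y) - c *(a * x+b * y)" by (simp add: algebra_simps)
  ultimately show False using e assms by auto
qed

lemma mob_comp:
  assumes "a'* d' - b'* c' \<noteq> 0"
  shows "mob a b c d \<circ> mob a' b' c' d' = mob (a * a'+b * c') (a * b'+b * d') (c * a'+d * c') (c * b'+d * d')"
proof
  fix w
  have nz: "a'* rx w+b'* ry w \<noteq> 0 \<or> c'* rx w+d'* ry w \<noteq> 0" using lin_nz[OF assms rep_nz] .
  show "(mob a b c d \<circ> mob a' b' c' d') w = mob (a * a'+b * c') (a * b'+b * d') (c * a'+d * c') (c * b'+d * d') w"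
    unfolding comp_def
    by (subst mob_def[of a' b' c' d'], subst mob_proj[OF nz]) (simp add: mob_def algebra_simps)
qed

lemma mob_id: "mob 1 0 0 1 = id"
  by (auto simp: mob_def)

lemma mob_inv:
  assumes "a * d - b * c \<noteq> 0"
  shows "mob d (-b) (-c) a \<circ> mob a b c d = id" "mob a b c d \<circ> mob d (-b) (-c) a = id"
proof -
  have "mob d (-b) (-c) a \<circ> mob a b c d = mob (a * d-b * c) 0 0 (a * d-b * c)"
    using assms by (simp add: mob_comp algebra_simps)
  also have "\<dots> = id" using assms by (auto simp: mob_def fun_eq_iff proj_def rx_def ry_def split: option.splits)
  finally show "mob d (-b) (-c) a \<circ> mob a b c d = id" .
  have "mob a b c d \<circ> mob d (-b) (-c) a = mob (a * d-b * c) 0 0 (a * d-b * c)"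
    using assms by (subst mob_comp) (simp_all add: algebra_simps)
  also have "\<dots> = id" using assms by (auto simp: mob_def fun_eq_iff proj_def rx_def ry_def split: option.splits)
  finally show "mob a b c d \<circ> mob d (-b) (-c) a = id" .
qed

lemma poly_deg1: "degree (p::complex poly) \<le> 1 \<Longrightarrow> poly p z = coeff p 1 * z + coeff p 0"
  using homf_Some[of p 1 z] by (simp add: homf1' algebra_simps)

lemma deg1_const: assumes "degree (p::complex poly) \<le> 1" "coeff p 1 = 0" shows "degree p = 0"
proof (rule ccontr)
  assume a: "degree p \<noteq> 0"
  then have "degree p = 1" using assms(1) by simp
  then have "coeff p (degree p) = 0" using assms(2) by simp
  then have "p = 0" by simp
  then show False using a by simp
qed

lemma deg1_zero: assumes "degree (p::complex poly) \<le> 1" "coeff p 1 = 0" "coeff p 0 = 0" shows "p = 0"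
proof -
  have "degree p = 0" using deg1_const assms by blast
  then have "coeff p (degree p) = 0" using assms(3) by simp
  then show "p = 0" by simp
qed

lemma moebius_iff: "moebius \<tau> \<longleftrightarrow> (\<exists>a b c d. a * d - b * c \<noteq> 0 \<and> \<tau> = mob a b c d)"
proof
  assume "moebius \<tau>"
  then obtain p q where pq: "q \<noteq> 0" "coprime p q" "max (degree p) (degree q) = 1" "\<tau> = rat_eval p q"
    by (auto simp: moebius_def rational_map_deg_def)
  let ?a = "coeff p 1" and ?b = "coeff p 0" and ?c = "coeff q 1" and ?d = "coeff q 0"
  have t: "\<tau> = mob ?a ?b ?c ?d"
    using pq by (auto simp: fun_eq_iff rat_eval_hom homf1 homf1' mob_def)
  have dp: "degree p \<le> 1" "degree q \<le> 1" using pq(3) by auto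
  have "?a *?d - ?b *?c \<noteq> 0"
  proof
    assume h: "?a *?d - ?b *?c = 0"
    show False
    proof (cases "?c = 0")
      case False
      define z where "z = - ?d / ?c"
      have "poly q z = 0" using False dp by (simp add: poly_deg1 z_def)
      moreover have "poly p z = 0"
      proof -
        have "poly p z = ?a * z + ?b" using dp poly_deg1 by simp
        moreover have "?c * (?a * z + ?b) = ?b *?c - ?a *?d" using False
          unfolding z_def by (simp add: algebra_simps)
        ultimately show ?thesis using h False by simp
      qed
      ultimately show False using coprime_poly_0[OF pq(2), of z] by simp
    next
      case True
      have "?d \<noteq> 0"
      proof
        assume "?d = 0"
        then have "q = 0" using True dp by (intro deg1_zero) auto
        with pq show False by simp
      qed
      then have "?a = 0" using h True by simp
      then have "degree p = 0" "degree q = 0" using True dp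
        by (auto intro: deg1_const)
      then show False using pq(3) by simp
    qed
  qed
  with t show "\<exists>a b c d. a * d - b * c \<noteq> 0 \<and> \<tau> = mob a b c d" by (intro exI conjI)
next
  assume "\<exists>a b c d. a * d - b * c \<noteq> 0 \<and> \<tau> = mob a b c d"
  then obtain a b c d where h: "a * d - b * c \<noteq> 0" "\<tau> = mob a b c d" by blast
  let ?p = "[:b, a:]" and ?q = "[:d, c:]"
  have q0: "?q \<noteq> 0" using h by auto
  have deg: "max (degree ?p) (degree ?q) = 1" using h by auto
  have cop: "coprime ?p ?q"
  proof (rule coprime_of_noroot)
    fix z
    show "poly ?p z \<noteq> 0 \<or> poly ?q z \<noteq> 0"
      using lin_nz[OF h(1), of z 1] by (simp add: algebra_simps)
  qed
  have "rat_eval ?p ?q = mob a b c d"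
  proof
    fix w show "rat_eval ?p ?q w = mob a b c d w"
      unfolding rat_eval_hom[OF q0 deg] homf1 mob_def by simp
  qed
  then have "\<tau> = rat_eval ?p ?q" using h by simp
  then show "moebius \<tau>" unfolding moebius_def rational_map_deg_def
    apply (rule_tac x="?p" in exI)
    apply (rule_tac x="?q" in exI)
    using q0 deg cop by simp
qed

definition qf :: "complex \<Rightarrow> complex \<Rightarrow> complex \<Rightarrow> complex \<Rightarrow> complex \<Rightarrow> complex" where
  "qf a b c x y = a * x^2 + b * x * y + c * y^2"

lemma factor_form:
  "\<exists>u v s t. \<forall>x y. qf a b c x y = (u * x+v * y)*(s * x+t * y) \<and> a = u * s \<and> b = u * t+v * s \<and> c = v * t"
proof (cases "a = 0")
  case True
  then show ?thesis by (intro exI[of _ b] exI[of _ c] exI[of _ 0] exI[of _ 1]) (simp add: qf_def power2_eq_square algebra_simps)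
next
  case False
  define D where "D = b^2 - 4 * a * c"
  define r1 where "r1 = (-b + csqrt D)/(2 * a)"
  define r2 where "r2 = (-b - csqrt D)/(2 * a)"
  have s: "r1 + r2 = -b/a" using False by (simp add: r1_def r2_def field_simps)
  have sq: "(csqrt D)^2 = D" by simp
  have p: "r1 * r2 = c/a"
  proof -
    have "r1 * r2 = (b^2 - (csqrt D)^2)/(4 * a^2)" using False
      by (simp add: r1_def r2_def field_simps power2_eq_square)
    also have "\<dots> = (4 * a * c)/(4 * a^2)" by (simp add: D_def)
    also have "\<dots> = c/a" using False by (simp add: field_simps power2_eq_square)
    finally show ?thesis .
  qed
  have b: "b = -a *(r1+r2)" using s False by (simp add: field_simps)
  have c: "c = a *(r1 * r2)" using p False by (simp add: field_simps)
  show ?thesis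
    by (intro exI[of _ a] exI[of _ "-a * r1"] exI[of _ 1] exI[of _ "-r2"])
       (simp add: qf_def b c power2_eq_square algebra_simps)
qed

lemma form_zero: "\<exists>x y. (x \<noteq> 0 \<or> y \<noteq> 0) \<and> qf a b c x y = 0"
proof -
  obtain u v s t where h: "\<forall>x y. qf a b c x y = (u * x+v * y)*(s * x+t * y)"
    using factor_form by blast
  show ?thesis
  proof (cases "u = 0 \<and> v = 0")
    case True then show ?thesis using h by (intro exI[of _ 1] exI[of _ 0]) auto
  next
    case False then show ?thesis using h by (intro exI[of _ "-v"] exI[of _ u]) (auto simp: algebra_simps)
  qed
qed

lemma disc_zero_square:
  assumes "b^2 = 4 * a * c"
  shows "\<exists>l1 l2. \<forall>x y. qf a b c x y = (l1 * x + l2 * y)^2"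
proof (cases "a = 0")
  case True
  then have "b = 0" using assms by simp
  then show ?thesis using True
    by (intro exI[of _ 0] exI[of _ "csqrt c"]) (simp add: qf_def power_mult_distrib)
next
  case False
  define l1 where "l1 = csqrt a"
  have l1: "l1^2 = a" "l1 \<noteq> 0" using False by (auto simp: l1_def)
  have c: "c = b^2/(4 * a)" using assms False by (simp add: field_simps)
  have "\<forall>x y. qf a b c x y = (l1 * x + (b/(2 * l1))* y)^2"
  proof (intro allI)
    fix x y
    have "(l1 * x + b/(2 * l1)* y)^2 = l1^2 * x^2 + b * x * y + b^2/(4 * l1^2)* y^2"
      using l1(2) by (simp add: field_simps power2_eq_square)
    then show "qf a b c x y = (l1 * x + b/(2 * l1)* y)^2" by (simp add: l1 c qf_def)
  qed
  then show ?thesis by blast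
qed

lemma res_factor:
  "((p2::complex)*(v * t) - p0 *(u * s))^2 - (p2 *(u * t+v * s) - p1 *(u * s))*(p1 *(v * t) - p0 *(u * t+v * s))
   = qf p2 p1 p0 (-v) u * qf p2 p1 p0 (-t) s"
  unfolding qf_def by algebra

lemma res_nonzero:
  assumes nc: "\<And>x y. x \<noteq> 0 \<or> y \<noteq> 0 \<Longrightarrow> qf p2 p1 p0 x y \<noteq> 0 \<or> qf q2 q1 q0 x y \<noteq> 0"
  shows "(p2 * q0 - p0 * q2)^2 - (p2 * q1 - p1 * q2)*(p1 * q0 - p0 * q1) \<noteq> 0"
proof
  assume r: "(p2 * q0 - p0 * q2)^2 - (p2 * q1 - p1 * q2)*(p1 * q0 - p0 * q1) = 0"
  obtain u v s t where h: "\<forall>x y. qf q2 q1 q0 x y = (u * x+v * y)*(s * x+t * y)" "q2 = u * s" "q1 = u * t+v * s" "q0 = v * t"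
    using factor_form by blast
  have "qf p2 p1 p0 (-v) u * qf p2 p1 p0 (-t) s = 0"
    using r unfolding res_factor[symmetric] h(2-4) .
  then have z: "qf p2 p1 p0 (-v) u = 0 \<or> qf p2 p1 p0 (-t) s = 0" by simp
  show False
  proof (cases "u = 0 \<and> v = 0")
    case True
    then have Q0: "\<And>x y. qf q2 q1 q0 x y = 0" using h(1) by simp
    obtain x y where "(x \<noteq> 0 \<or> y \<noteq> 0)" "qf p2 p1 p0 x y = 0" using form_zero by blast
    then show False using nc Q0 by blast
  next
    case uv: False
    show False
    proof (cases "s = 0 \<and> t = 0")
      case True
      then have Q0: "\<And>x y. qf q2 q1 q0 x y = 0" using h(1) by simp
      obtain x y where "(x \<noteq> 0 \<or> y \<noteq> 0)" "qf p2 p1 p0 x y = 0" using form_zero by blast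
      then show False using nc Q0 by blast
    next
      case st: False
      have "qf q2 q1 q0 (-v) u = 0" "qf q2 q1 q0 (-t) s = 0" using h(1) by (simp_all add: algebra_simps)
      then show False using z nc[of "-v" u] nc[of "-t" s] uv st by auto
    qed
  qed
qed

lemma common_zero_lin:
  assumes "e1 * f2 - f1 * e2 = (0::complex)"
  shows "\<exists>x y. (x \<noteq> 0 \<or> y \<noteq> 0) \<and> e1 * x + f1 * y = 0 \<and> e2 * x + f2 * y = 0"
proof (cases "e1 = 0 \<and> f1 = 0")
  case True
  show ?thesis
  proof (cases "e2 = 0 \<and> f2 = 0")
    case True then show ?thesis using \<open>e1 = 0 \<and> f1 = 0\<close> by (intro exI[of _ 1] exI[of _ 0]) auto
  next
    case False then show ?thesis using True by (intro exI[of _ "-f2"] exI[of _ e2]) (auto simp: algebra_simps)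
  qed
next
  case False then show ?thesis using assms by (intro exI[of _ "-f1"] exI[of _ e1]) (auto simp: algebra_simps)
qed

lemma normal_form:
  assumes nc: "\<And>x y. x \<noteq> 0 \<or> y \<noteq> 0 \<Longrightarrow> qf p2 p1 p0 x y \<noteq> 0 \<or> qf q2 q1 q0 x y \<noteq> 0"
  shows "\<exists>a b c d n1 n2 n3 n4. a * d - b * c \<noteq> 0 \<and> n1 * n4 - n2 * n3 \<noteq> 0 \<and>
    (\<forall>x y. qf p2 p1 p0 x y = n1 *(a * x+b * y)^2 + n2 *(c * x+d * y)^2 \<and>
           qf q2 q1 q0 x y = n3 *(a * x+b * y)^2 + n4 *(c * x+d * y)^2)"
proof -
  define D2 where "D2 = p1^2 - 4 * p2 * p0"
  define D1 where "D1 = 4 * p2 * q0 + 4 * q2 * p0 - 2 * p1 * q1"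
  define D0 where "D0 = q1^2 - 4 * q2 * q0"
  have "D1^2 - 4 * D2 * D0 = 16 *((p2 * q0 - p0 * q2)^2 - (p2 * q1 - p1 * q2)*(p1 * q0 - p0 * q1))"
    unfolding D2_def D1_def D0_def by algebra
  then have dD: "D1^2 - 4 * D2 * D0 \<noteq> 0" using res_nonzero[OF nc] by simp
  obtain u v s t where fD: "\<forall>x y. qf D2 D1 D0 x y = (u * x+v * y)*(s * x+t * y)" "D2 = u * s" "D1 = u * t+v * s" "D0 = v * t"
    using factor_form by blast
  have "(u * t - v * s)^2 = D1^2 - 4 * D2 * D0" unfolding fD(2-4) by algebra
  then have ut: "u * t - v * s \<noteq> 0" using dD by auto
  define a1 where "a1 = -v"
  define b1 where "b1 = u"
  define a2 where "a2 = -t"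
  define b2 where "b2 = s"
  define \<Delta> where "\<Delta> = a2 * b1 - a1 * b2"
  have \<Delta>: "\<Delta> \<noteq> 0" using ut by (simp add: \<Delta>_def a1_def a2_def b1_def b2_def algebra_simps)
  have Rdisc: "(\<alpha>* p1 - \<beta>* q1)^2 - 4 *(\<alpha>* p2 - \<beta>* q2)*(\<alpha>* p0 - \<beta>* q0) = qf D2 D1 D0 \<alpha> \<beta>" for \<alpha> \<beta>
    unfolding qf_def D2_def D1_def D0_def by algebra
  have Rqf: "qf (\<alpha>* p2 - \<beta>* q2) (\<alpha>* p1 - \<beta>* q1) (\<alpha>* p0 - \<beta>* q0) x y = \<alpha> * qf p2 p1 p0 x y - \<beta> * qf q2 q1 q0 x y" for \<alpha> \<beta> x y
    unfolding qf_def by algebra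
  have z1: "qf D2 D1 D0 a1 b1 = 0" using fD(1) by (simp add: a1_def b1_def algebra_simps)
  have z2: "qf D2 D1 D0 a2 b2 = 0" using fD(1) by (simp add: a2_def b2_def algebra_simps)
  obtain e1 f1 where l1: "\<forall>x y. qf (a1 * p2 - b1 * q2) (a1 * p1 - b1 * q1) (a1 * p0 - b1 * q0) x y = (e1 * x + f1 * y)^2"
    using disc_zero_square[of "a1 * p1 - b1 * q1" "a1 * p2 - b1 * q2" "a1 * p0 - b1 * q0"] Rdisc[of a1 b1] z1 by auto
  obtain e2 f2 where l2: "\<forall>x y. qf (a2 * p2 - b2 * q2) (a2 * p1 - b2 * q1) (a2 * p0 - b2 * q0) x y = (e2 * x + f2 * y)^2"
    using disc_zero_square[of "a2 * p1 - b2 * q1" "a2 * p2 - b2 * q2" "a2 * p0 - b2 * q0"] Rdisc[of a2 b2] z2 by auto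
  have R1: "a1 * qf p2 p1 p0 x y - b1 * qf q2 q1 q0 x y = (e1 * x + f1 * y)^2" for x y
    using l1 Rqf by metis
  have R2: "a2 * qf p2 p1 p0 x y - b2 * qf q2 q1 q0 x y = (e2 * x + f2 * y)^2" for x y
    using l2 Rqf by metis
  have P: "\<Delta> * qf p2 p1 p0 x y = b1 * (e2 * x + f2 * y)^2 - b2 * (e1 * x + f1 * y)^2" for x y
    unfolding R1[symmetric] R2[symmetric] \<Delta>_def by (simp add: algebra_simps)
  have Q: "\<Delta> * qf q2 q1 q0 x y = a1 * (e2 * x + f2 * y)^2 - a2 * (e1 * x + f1 * y)^2" for x y
    unfolding R1[symmetric] R2[symmetric] \<Delta>_def by (simp add: algebra_simps)
  have ind: "e1 * f2 - f1 * e2 \<noteq> 0"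
  proof
    assume "e1 * f2 - f1 * e2 = 0"
    then obtain x y where xy: "x \<noteq> 0 \<or> y \<noteq> 0" "e1 * x + f1 * y = 0" "e2 * x + f2 * y = 0"
      using common_zero_lin by blast
    have "\<Delta> * qf p2 p1 p0 x y = 0" "\<Delta> * qf q2 q1 q0 x y = 0" using P Q xy by simp_all
    then show False using \<Delta> nc[OF xy(1)] by simp
  qed
  show ?thesis
  proof (intro exI conjI allI)
    show "e1 * f2 - f1 * e2 \<noteq> 0" by (fact ind)
    show "(-b2/\<Delta>)*(a1/\<Delta>) - (b1/\<Delta>)*(-a2/\<Delta>) \<noteq> 0"
    proof -
      have "(-b2/\<Delta>)*(a1/\<Delta>) - (b1/\<Delta>)*(-a2/\<Delta>) = (a2 * b1 - a1 * b2)/(\<Delta>*\<Delta>)"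
        by (simp add: diff_divide_distrib mult.commute)
      also have "\<dots> = 1/\<Delta>" using \<Delta> unfolding \<Delta>_def[symmetric] by simp
      finally show ?thesis using \<Delta> by simp
    qed
    fix x y
    show "qf p2 p1 p0 x y = (-b2/\<Delta>) * (e1 * x + f1 * y)^2 + (b1/\<Delta>) * (e2 * x + f2 * y)^2"
      using P[of x y] \<Delta> by (simp add: field_simps)
    show "qf q2 q1 q0 x y = (-a2/\<Delta>) * (e1 * x + f1 * y)^2 + (a1/\<Delta>) * (e2 * x + f2 * y)^2"
      using Q[of x y] \<Delta> by (simp add: field_simps)
  qed
qed

definition qmap where
  "qmap p2 p1 p0 q2 q1 q0 w = proj (qf p2 p1 p0 (rx w) (ry w)) (qf q2 q1 q0 (rx w) (ry w))"

lemma qf_scale: "qf a b c (k * x) (k * y) = k^2 * qf a b c x y"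
  by (simp add: qf_def power2_eq_square algebra_simps)

lemma qmap_proj:
  assumes "x \<noteq> 0 \<or> y \<noteq> 0"
  shows "qmap p2 p1 p0 q2 q1 q0 (proj x y) = proj (qf p2 p1 p0 x y) (qf q2 q1 q0 x y)"
proof -
  obtain k where k: "k \<noteq> 0" "x = k * rx (proj x y)" "y = k * ry (proj x y)"
    using rep_of_proj[OF assms] by blast
  define X where "X = rx (proj x y)"
  define Y where "Y = ry (proj x y)"
  have xX: "x = k * X" "y = k * Y" using k(2,3) unfolding X_def Y_def by simp_all
  have "qmap p2 p1 p0 q2 q1 q0 (proj x y) = proj (qf p2 p1 p0 X Y) (qf q2 q1 q0 X Y)"
    by (simp add: qmap_def X_def Y_def)
  also have "\<dots> = proj (k^2 * qf p2 p1 p0 X Y) (k^2 * qf q2 q1 q0 X Y)" using k(1) by (simp add: proj_scale)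
  also have "\<dots> = proj (qf p2 p1 p0 x y) (qf q2 q1 q0 x y)" unfolding xX qf_scale ..
  finally show ?thesis .
qed

lemma rat_eval_qmap:
  assumes "q \<noteq> 0" "max (degree p) (degree q) = 2"
  shows "rat_eval p q = qmap (coeff p 2) (coeff p 1) (coeff p 0) (coeff q 2) (coeff q 1) (coeff q 0)"
proof
  fix w show "rat_eval p q w = qmap (coeff p 2) (coeff p 1) (coeff p 0) (coeff q 2) (coeff q 1) (coeff q 0) w"
    unfolding rat_eval_hom[OF assms] homf2 qmap_def qf_def by (simp add: algebra_simps)
qed

lemma sq_qmap: "sq_map = qmap 1 0 0 0 0 1"
proof -
  have "sq_map = qmap (coeff [:0,0,1:] 2) (coeff [:0,0,1:] 1) (coeff [:0,0,1:] 0) (coeff [:1:] 2) (coeff [:1:] 1) (coeff [:1:] 0)"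
    unfolding sq_map_def by (rule rat_eval_qmap) (simp_all add: numeral_2_eq_2)
  then show ?thesis by (simp add: numeral_2_eq_2)
qed

lemma inv_sq_qmap: "inv_sq_map = qmap 0 0 1 1 0 0"
proof -
  have "inv_sq_map = qmap (coeff [:1:] 2) (coeff [:1:] 1) (coeff [:1:] 0) (coeff [:0,0,1:] 2) (coeff [:0,0,1:] 1) (coeff [:0,0,1:] 0)"
    unfolding inv_sq_map_def by (rule rat_eval_qmap) (simp_all add: numeral_2_eq_2)
  then show ?thesis by (simp add: numeral_2_eq_2)
qed

lemma sq_proj: "x \<noteq> 0 \<or> y \<noteq> 0 \<Longrightarrow> sq_map (proj x y) = proj (x^2) (y^2)"
  by (simp add: sq_qmap qmap_proj qf_def)

lemma inv_sq_proj: "x \<noteq> 0 \<or> y \<noteq> 0 \<Longrightarrow> inv_sq_map (proj x y) = proj (y^2) (x^2)"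
  by (simp add: inv_sq_qmap qmap_proj qf_def)

lemma quad_qmap:
  assumes "quadratic_map f"
  shows "\<exists>p2 p1 p0 q2 q1 q0. (\<forall>x y. x \<noteq> 0 \<or> y \<noteq> 0 \<longrightarrow> qf p2 p1 p0 x y \<noteq> 0 \<or> qf q2 q1 q0 x y \<noteq> 0)
     \<and> f = qmap p2 p1 p0 q2 q1 q0"
proof -
  obtain p q where pq: "q \<noteq> 0" "coprime p q" "max (degree p) (degree q) = 2" "f = rat_eval p q"
    using assms by (auto simp: quadratic_map_def rational_map_deg_def)
  have hs: "qf (coeff r 2) (coeff r 1) (coeff r 0) x y = y^2 * poly r (x/y)" if "y \<noteq> 0" "degree r \<le> 2" for r x y
  proof -
    have "poly r (x/y) = homf r 2 (x/y) 1" using homf_Some[OF that(2)] by simp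
    then show ?thesis using that(1) by (simp add: homf2 qf_def field_simps power2_eq_square)
  qed
  have nc: "qf (coeff p 2) (coeff p 1) (coeff p 0) x y \<noteq> 0 \<or> qf (coeff q 2) (coeff q 1) (coeff q 0) x y \<noteq> 0"
    if xy: "x \<noteq> 0 \<or> y \<noteq> 0" for x y
  proof (cases "y = 0")
    case False
    have dp: "degree p \<le> 2" "degree q \<le> 2" using pq(3) by auto
    show ?thesis using hs[OF False dp(1)] hs[OF False dp(2)] coprime_poly_0[OF pq(2), of "x/y"] False by auto
  next
    case True
    then have x: "x \<noteq> 0" using xy by simp
    have "coeff p 2 \<noteq> 0 \<or> coeff q 2 \<noteq> 0"
    proof (cases "degree p = 2")
      case True then show ?thesis by (metis leading_coeff_0_iff zero_neq_numeral degree_0)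
    next
      case False then have "degree q = 2" using pq(3) by (auto simp: max_def split: if_splits)
      then show ?thesis by (metis leading_coeff_0_iff zero_neq_numeral degree_0)
    qed
    then show ?thesis using x True by (auto simp: qf_def)
  qed
  show ?thesis using nc rat_eval_qmap[OF pq(1,3)] pq(4) by blast
qed

lemma quad_decomp:
  assumes "quadratic_map f"
  shows "\<exists>a b c d n1 n2 n3 n4. a * d - b * c \<noteq> 0 \<and> n1 * n4 - n2 * n3 \<noteq> 0 \<and>
     f = mob n1 n2 n3 n4 \<circ> sq_map \<circ> mob a b c d"
proof -
  obtain p2 p1 p0 q2 q1 q0 where nc: "\<And>x y. x \<noteq> 0 \<or> y \<noteq> 0 \<Longrightarrow> qf p2 p1 p0 x y \<noteq> 0 \<or> qf q2 q1 q0 x y \<noteq> 0"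
     and f: "f = qmap p2 p1 p0 q2 q1 q0"
    using quad_qmap[OF assms] by blast
  obtain a b c d n1 n2 n3 n4 where h: "a * d - b * c \<noteq> 0" "n1 * n4 - n2 * n3 \<noteq> 0"
    "\<And>x y. qf p2 p1 p0 x y = n1 *(a * x+b * y)^2 + n2 *(c * x+d * y)^2"
    "\<And>x y. qf q2 q1 q0 x y = n3 *(a * x+b * y)^2 + n4 *(c * x+d * y)^2"
    using normal_form[OF nc] by blast
  have "f = mob n1 n2 n3 n4 \<circ> sq_map \<circ> mob a b c d"
  proof
    fix w
    define uu where "uu = a * rx w + b * ry w"
    define vv where "vv = c * rx w + d * ry w"
    have uv: "uu \<noteq> 0 \<or> vv \<noteq> 0" using lin_nz[OF h(1) rep_nz] by (simp add: uu_def vv_def)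
    then have uv2: "uu^2 \<noteq> 0 \<or> vv^2 \<noteq> 0" by simp
    have "(mob n1 n2 n3 n4 \<circ> sq_map \<circ> mob a b c d) w = mob n1 n2 n3 n4 (sq_map (proj uu vv))"
      by (simp add: mob_def uu_def vv_def)
    also have "\<dots> = proj (n1 * uu^2 + n2 * vv^2) (n3 * uu^2+n4 * vv^2)"
      by (simp add: sq_proj[OF uv] mob_proj[OF uv2])
    also have "\<dots> = f w" by (simp add: f qmap_def h(3,4) uu_def vv_def)
    finally show "f w = (mob n1 n2 n3 n4 \<circ> sq_map \<circ> mob a b c d) w" by simp
  qed
  then show ?thesis using h(1,2) by blast
qed

lemma moebius_mob: "a * d - b * c \<noteq> 0 \<Longrightarrow> moebius (mob a b c d)"
  using moebius_iff by blast

lemma moebius_comp: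
  assumes "moebius \<alpha>" "moebius \<beta>" shows "moebius (\<alpha> \<circ> \<beta>)"
proof -
  obtain a b c d where A: "a * d - b * c \<noteq> 0" "\<alpha> = mob a b c d" using assms(1) moebius_iff by blast
  obtain a' b' c' d' where B: "a'* d' - b'* c' \<noteq> 0" "\<beta> = mob a' b' c' d'" using assms(2) moebius_iff by blast
  have "(a * a'+b * c')*(c * b'+d * d') - (a * b'+b * d')*(c * a'+d * c') = (a * d-b * c)*(a'* d'-b'* c')"
    by (simp add: algebra_simps)
  then have "(a * a'+b * c')*(c * b'+d * d') - (a * b'+b * d')*(c * a'+d * c') \<noteq> 0" using A B by simp
  then show ?thesis using A B mob_comp[OF B(1)] moebius_mob by simp
qed

lemma moebius_inv:
  assumes "moebius \<alpha>"
  shows "\<exists>\<beta>. moebius \<beta> \<and> (\<forall>x. \<alpha> (\<beta> x) = x) \<and> (\<forall>x. \<beta> (\<alpha> x) = x)"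
proof -
  obtain a b c d where A: "a * d - b * c \<noteq> 0" "\<alpha> = mob a b c d" using assms moebius_iff by blast
  have "d * a - (-b)*(-c) \<noteq> 0" using A by (simp add: algebra_simps)
  then show ?thesis using mob_inv[OF A(1)] A(2)
    by (intro exI[of _ "mob d (-b) (-c) a"]) (auto simp: moebius_mob fun_eq_iff)
qed

lemma funpow_conj:
  assumes "\<And>x. B (A x) = x" "n > 0"
  shows "(A \<circ> g \<circ> B) ^^ n = A \<circ> (g ^^ n) \<circ> B"
  using assms(2)
proof (induction n)
  case 0 then show ?case by simp
next
  case (Suc n)
  show ?case
  proof (cases "n = 0")
    case True then show ?thesis by simp
  next
    case False
    then have pos: "0 < n" by simp
    have "(A \<circ> g \<circ> B) ^^ Suc n = (A \<circ> g \<circ> B) \<circ> (A \<circ> g \<circ> B) ^^ n" by simp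
    also have "\<dots> = (A \<circ> g \<circ> B) \<circ> (A \<circ> (g ^^ n) \<circ> B)" by (simp only: Suc.IH[OF pos])
    also have "\<dots> = A \<circ> (g ^^ Suc n) \<circ> B" by (simp add: fun_eq_iff assms(1))
    finally show ?thesis .
  qed
qed

lemma funpow_conj':
  assumes "\<And>x. B (A x) = x" "\<And>x. A (B x) = x"
  shows "(A \<circ> g \<circ> B) ^^ n = A \<circ> (g ^^ n) \<circ> B"
proof (cases "n = 0")
  case True then show ?thesis using assms(2) by (simp add: fun_eq_iff)
next
  case False then show ?thesis using funpow_conj[where A=A and B=B, OF assms(1)] by simp
qed

lemma conj_deck:
  assumes AB: "\<And>x. A (B x) = x" and BA: "\<And>x. B (A x) = x"
    and mA: "moebius A" and mB: "moebius B" and f: "f = A \<circ> h \<circ> B"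
  shows "Deck (f ^^ k) = (\<lambda>\<tau>. A \<circ> \<tau> \<circ> B) ` Deck (h ^^ k)"
proof -
  have fk: "f ^^ k = A \<circ> (h ^^ k) \<circ> B" using funpow_conj'[where A=A and B=B, OF BA AB] f by simp
  have hk: "h ^^ k = B \<circ> (f ^^ k) \<circ> A" using fk by (simp add: fun_eq_iff AB BA)
  show ?thesis
  proof
    show "Deck (f ^^ k) \<subseteq> (\<lambda>\<tau>. A \<circ> \<tau> \<circ> B) ` Deck (h ^^ k)"
    proof
      fix \<tau>' assume "\<tau>' \<in> Deck (f ^^ k)"
      then have m: "moebius \<tau>'" and e: "(f ^^ k) \<circ> \<tau>' = f ^^ k" by (auto simp: Deck_def)
      define \<tau> where "\<tau> = B \<circ> \<tau>' \<circ> A"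
      have "moebius \<tau>" unfolding \<tau>_def using m mA mB by (intro moebius_comp)
      moreover have "(h ^^ k) \<circ> \<tau> = h ^^ k"
      proof
        fix x
        have "(f ^^ k) (\<tau>' (A x)) = (f ^^ k) (A x)" using e by (metis comp_apply)
        then show "((h ^^ k) \<circ> \<tau>) x = (h ^^ k) x" by (simp add: hk \<tau>_def BA AB)
      qed
      moreover have "\<tau>' = A \<circ> \<tau> \<circ> B" by (simp add: \<tau>_def fun_eq_iff AB)
      ultimately show "\<tau>' \<in> (\<lambda>\<tau>. A \<circ> \<tau> \<circ> B) ` Deck (h ^^ k)" by (auto simp: Deck_def)
    qed
  next
    show "(\<lambda>\<tau>. A \<circ> \<tau> \<circ> B) ` Deck (h ^^ k) \<subseteq> Deck (f ^^ k)"
    proof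
      fix \<tau>' assume "\<tau>' \<in> (\<lambda>\<tau>. A \<circ> \<tau> \<circ> B) ` Deck (h ^^ k)"
      then obtain \<tau> where t: "\<tau> \<in> Deck (h ^^ k)" "\<tau>' = A \<circ> \<tau> \<circ> B" by blast
      then have m: "moebius \<tau>" and e: "(h ^^ k) \<circ> \<tau> = h ^^ k" by (auto simp: Deck_def)
      have "moebius \<tau>'" unfolding t(2) using m mA mB by (intro moebius_comp)
      moreover have "(f ^^ k) \<circ> \<tau>' = f ^^ k"
      proof
        fix x
        have "(h ^^ k) (\<tau> (B x)) = (h ^^ k) (B x)" using e by (metis comp_apply)
        then show "((f ^^ k) \<circ> \<tau>') x = (f ^^ k) x" by (simp add: fk t(2) BA AB)
      qed
      ultimately show "\<tau>' \<in> Deck (f ^^ k)" by (auto simp: Deck_def)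
    qed
  qed
qed

lemma cyclic_conj:
  assumes AB: "\<And>x. A (B x) = x" and BA: "\<And>x. B (A x) = x"
    and cyc: "cyclic_order_gt2 G"
  shows "cyclic_order_gt2 ((\<lambda>\<tau>. A \<circ> \<tau> \<circ> B) ` G)"
proof -
  let ?c = "\<lambda>\<tau>. A \<circ> \<tau> \<circ> B"
  have inj: "inj ?c"
  proof (rule injI)
    fix t1 t2 assume e: "A \<circ> t1 \<circ> B = A \<circ> t2 \<circ> B"
    show "t1 = t2"
    proof
      fix x
      have "B ((A \<circ> t1 \<circ> B) (A x)) = B ((A \<circ> t2 \<circ> B) (A x))" using e by simp
      then show "t1 x = t2 x" by (simp add: AB BA)
    qed
  qed
  obtain g where g: "g \<in> G" "G = {g ^^ n | n. True}" and fin: "finite G" and c: "card G > 2"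
    using cyc by (auto simp: cyclic_order_gt2_def)
  have "?c ` G = {(?c g) ^^ n | n. True}"
    using g(2) by (auto simp: funpow_conj'[where A=A and B=B, OF BA AB])
  moreover have "card (?c ` G) = card G" using inj by (simp add: card_image inj_on_subset)
  moreover have "finite (?c ` G)" using fin by simp
  moreover have "?c g \<in> ?c ` G" using g(1) by simp
  ultimately show ?thesis using c unfolding cyclic_order_gt2_def by (intro conjI bexI[of _ "?c g"]) auto
qed

lemma power_map_conj:
  assumes AB: "\<And>x. A (B x) = x" and BA: "\<And>x. B (A x) = x"
    and mA: "moebius A" and f: "f = A \<circ> h \<circ> B" and p: "power_map h"
  shows "power_map f"
proof -
  obtain \<mu> where m: "moebius \<mu>" and e: "h \<circ> \<mu> = \<mu> \<circ> sq_map \<or> h \<circ> \<mu> = \<mu> \<circ> inv_sq_map"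
    using p by (auto simp: power_map_def)
  have "moebius (A \<circ> \<mu>)" using mA m by (rule moebius_comp)
  moreover have "f \<circ> (A \<circ> \<mu>) = A \<circ> (h \<circ> \<mu>)" by (simp add: f fun_eq_iff BA)
  ultimately show ?thesis using e unfolding power_map_def
    by (metis comp_assoc)
qed

definition sscale :: "complex \<Rightarrow> sphere \<Rightarrow> sphere" where "sscale t = mob t 0 0 1"

lemma scale_Some[simp]: "sscale t (Some z) = Some (t * z)"
  by (simp add: sscale_def mob_def rx_def ry_def proj_def)
lemma scale_None[simp]: "sscale t None = None"
  by (simp add: sscale_def mob_def rx_def ry_def proj_def)
lemma scale_comp: "sscale s \<circ> sscale t = sscale (s * t)"
proof
  fix w show "(sscale s \<circ> sscale t) w = sscale (s * t) w" by (cases w) auto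
qed
lemma scale_1: "sscale 1 = id"
proof
  fix w show "sscale 1 w = id w" by (cases w) auto
qed
lemma scale_pow: "sscale t ^^ n = sscale (t^n)"
proof (induction n)
  case 0 then show ?case by (simp add: scale_1)
next
  case (Suc n) then show ?case by (simp add: scale_comp)
qed
lemma moebius_scale: "t \<noteq> 0 \<Longrightarrow> moebius (sscale t)"
  unfolding sscale_def by (rule moebius_mob) simp

lemma sq_Some: "sq_map (Some z) = Some (z^2)"
proof -
  have "sq_map (Some z) = sq_map (proj z 1)" by (simp add: proj_def)
  also have "\<dots> = Some (z^2)" by (subst sq_proj) (simp_all add: proj_def)
  finally show ?thesis .
qed
lemma sq_None: "sq_map None = None"
proof -
  have "sq_map None = sq_map (proj 1 0)" by (simp add: proj_def)
  also have "\<dots> = None" by (subst sq_proj) (simp_all add: proj_def)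
  finally show ?thesis .
qed
lemma inv_sq_Some: "inv_sq_map (Some z) = (if z = 0 then None else Some (1/z^2))"
proof -
  have "inv_sq_map (Some z) = inv_sq_map (proj z 1)" by (simp add: proj_def)
  also have "\<dots> = (if z = 0 then None else Some (1/z^2))" by (subst inv_sq_proj) (simp_all add: proj_def)
  finally show ?thesis .
qed
lemma inv_sq_None: "inv_sq_map None = Some 0"
proof -
  have "inv_sq_map None = inv_sq_map (proj 1 0)" by (simp add: proj_def)
  also have "\<dots> = Some 0" by (subst inv_sq_proj) (simp_all add: proj_def)
  finally show ?thesis .
qed

definition F4 :: "sphere \<Rightarrow> sphere" where "F4 w = map_option (\<lambda>z. z^4) w"

lemma sq2: "sq_map ^^ 2 = F4"
proof
  fix w show "(sq_map ^^ 2) w = F4 w"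
    by (cases w) (simp_all add: numeral_2_eq_2 sq_Some sq_None F4_def eval_nat_numeral)
qed

lemma inv_sq2: "inv_sq_map ^^ 2 = F4"
proof
  fix w show "(inv_sq_map ^^ 2) w = F4 w"
  proof (cases w)
    case None then show ?thesis by (simp add: numeral_2_eq_2 inv_sq_None inv_sq_Some F4_def)
  next
    case (Some z) then show ?thesis
      by (cases "z = 0") (simp_all add: numeral_2_eq_2 inv_sq_None inv_sq_Some F4_def field_simps eval_nat_numeral)
  qed
qed

lemma i_pow_mod: "\<i> ^ n = \<i> ^ (n mod 4)"
proof -
  have "\<i> ^ n = \<i> ^ (4 * (n div 4) + n mod 4)" by simp
  also have "\<dots> = (\<i>^4) ^ (n div 4) * \<i> ^ (n mod 4)" by (simp only: power_add power_mult)
  also have "\<dots> = \<i> ^ (n mod 4)" by simp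
  finally show ?thesis .
qed

lemma i3: "\<i>^3 = -\<i>" by (simp add: power3_eq_cube)
lemma i2: "\<i>^2 = -1" by (simp add: power2_eq_square)

lemma fourth_roots: "(t::complex)^4 = 1 \<Longrightarrow> \<exists>n. t = \<i>^n"
proof -
  assume h: "t^4 = 1"
  have "(t - 1)*(t + 1)*(t - \<i>)*(t + \<i>) = t^4 - 1" by (simp add: algebra_simps power_def eval_nat_numeral)
  then have "(t - 1)*(t + 1)*(t - \<i>)*(t + \<i>) = 0" using h by simp
  then have "t = 1 \<or> t = -1 \<or> t = \<i> \<or> t = -\<i>" by (auto simp: add_eq_0_iff2)
  then show ?thesis
  proof (elim disjE)
    assume "t = 1" then show ?thesis by (intro exI[of _ 0]) simp
  next
    assume "t = -1" then show ?thesis by (intro exI[of _ 2]) simp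
  next
    assume "t = \<i>" then show ?thesis by (intro exI[of _ 1]) simp
  next
    assume "t = -\<i>" then show ?thesis by (intro exI[of _ 3]) (simp add: i3)
  qed
qed

lemma F4_Some0: "F4 w = Some 0 \<longleftrightarrow> w = Some 0"
  by (cases w) (auto simp: F4_def)
lemma F4_None: "F4 w = None \<longleftrightarrow> w = None"
  by (cases w) (auto simp: F4_def)

lemma Deck_F4: "Deck F4 = {sscale (\<i>^n) | n. True}"
proof
  show "Deck F4 \<subseteq> {sscale (\<i>^n) | n. True}"
  proof
    fix \<tau> assume "\<tau> \<in> Deck F4"
    then have m: "moebius \<tau>" and e: "\<And>w. F4 (\<tau> w) = F4 w" by (auto simp: Deck_def fun_eq_iff)
    obtain a b c d where t: "a * d - b * c \<noteq> 0" "\<tau> = mob a b c d" using m moebius_iff by blast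
    have "\<tau> (Some 0) = Some 0" using e[of "Some 0"] F4_Some0 by (simp add: F4_def)
    then have bd: "d \<noteq> 0" "b = 0" using t(2) by (auto simp: mob_def rx_def ry_def proj_def split: if_splits)
    have "\<tau> None = None" using e[of None] F4_None by (simp add: F4_def)
    then have c: "c = 0" using t(2) by (auto simp: mob_def rx_def ry_def proj_def split: if_splits)
    have ts: "\<tau> = sscale (a/d)"
    proof
      fix w show "\<tau> w = sscale (a/d) w"
        using bd c t(2) by (cases w) (auto simp: mob_def rx_def ry_def proj_def)
    qed
    have "F4 (Some (a/d)) = F4 (Some 1)" using e[of "Some 1"] ts by simp
    then have "(a/d)^4 = 1" by (simp add: F4_def)
    then obtain n where "a/d = \<i>^n" using fourth_roots by blast
    then have "\<tau> = sscale (\<i>^n)" using ts by simp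
    then show "\<tau> \<in> {sscale (\<i>^n) | n. True}" by blast
  qed
next
  show "{sscale (\<i>^n) | n. True} \<subseteq> Deck F4"
  proof
    fix \<tau> assume "\<tau> \<in> {sscale (\<i>^n) | n. True}"
    then obtain n where t: "\<tau> = sscale (\<i>^n)" by blast
    have "moebius \<tau>" using t by (simp add: moebius_scale)
    moreover have "F4 \<circ> \<tau> = F4"
    proof
      fix w
      have "(\<i>^n)^4 = 1" by (simp add: power_mult[symmetric] mult.commute[of n] power_mult)
      then show "(F4 \<circ> \<tau>) w = F4 w" using t by (cases w) (simp_all add: F4_def power_mult_distrib)
    qed
    ultimately show "\<tau> \<in> Deck F4" by (simp add: Deck_def)
  qed
qed

lemma cyclic_F4: "cyclic_order_gt2 (Deck F4)"
proof -
  have set: "{sscale (\<i>^n) | n. True} = sscale ` {1, \<i>, -1, -\<i>}"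
  proof
    show "{sscale (\<i>^n) | n. True} \<subseteq> sscale ` {1, \<i>, -1, -\<i>}"
    proof
      fix x assume "x \<in> {sscale (\<i>^n) | n. True}"
      then obtain n where x: "x = sscale (\<i>^n)" by blast
      have "n mod 4 < 4" by simp
      then have "n mod 4 = 0 \<or> n mod 4 = 1 \<or> n mod 4 = 2 \<or> n mod 4 = 3" by linarith
      then have "\<i>^(n mod 4) \<in> {1, \<i>, -1, -\<i>}"
      proof (elim disjE)
        assume "n mod 4 = 0" then show ?thesis by simp
      next
        assume "n mod 4 = 1" then show ?thesis by simp
      next
        assume "n mod 4 = 2" then show ?thesis by (simp add: power2_eq_square)
      next
        assume "n mod 4 = 3" then show ?thesis by (simp add: i3)
      qed
      then have "\<i>^n \<in> {1, \<i>, -1, -\<i>}" using i_pow_mod[of n] by simp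
      then show "x \<in> sscale ` {1, \<i>, -1, -\<i>}" using x by blast
    qed
  next
    have e: "1 = \<i>^0" "\<i> = \<i>^1" "-1 = \<i>^2" "-\<i> = \<i>^3" by (simp_all add: i2 i3)
    show "sscale ` {1, \<i>, -1, -\<i>} \<subseteq> {sscale (\<i>^n) | n. True}"
    proof
      fix x assume "x \<in> sscale ` {1, \<i>, -1, -\<i>}"
      then obtain t where t: "t \<in> {1, \<i>, -1, -\<i>}" "x = sscale t" by blast
      have "\<exists>n. t = \<i>^n" using t(1) e by blast
      then show "x \<in> {sscale (\<i>^n) | n. True}" using t(2) by blast
    qed
  qed
  have inj: "inj sscale"
  proof (rule injI)
    fix s t assume "sscale s = sscale t"
    then have "sscale s (Some 1) = sscale t (Some 1)" by simp
    then show "s = t" by simp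
  qed
  have "card (sscale ` {1, \<i>, -1, -\<i>}) = card {1, \<i>, -1, -\<i>}"
    using inj by (rule card_image[OF inj_on_subset]) simp
  also have "\<dots> = 4" by (simp add: complex_eq_iff)
  finally have c: "card (Deck F4) = 4" using set Deck_F4 by simp
  have "Deck F4 = {sscale \<i> ^^ n | n. True}" by (simp add: Deck_F4 scale_pow)
  moreover have "sscale \<i> \<in> Deck F4"
  proof -
    have "sscale \<i> = sscale (\<i>^1)" by simp
    then show ?thesis unfolding Deck_F4 by blast
  qed
  moreover have "finite (Deck F4)" using set Deck_F4 by simp
  ultimately show ?thesis using c unfolding cyclic_order_gt2_def by (intro conjI bexI[of _ "sscale \<i>"]) simp_all
qed

theorem power_imp_cyclic:
  assumes "power_map f"
  shows "\<exists>k. cyclic_order_gt2 (Deck (f ^^ k))"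
proof -
  obtain \<mu> s where m: "moebius \<mu>" and e: "f \<circ> \<mu> = \<mu> \<circ> s" and s: "s = sq_map \<or> s = inv_sq_map"
    using assms by (auto simp: power_map_def)
  obtain \<mu>i where mi: "moebius \<mu>i" "\<And>x. \<mu> (\<mu>i x) = x" "\<And>x. \<mu>i (\<mu> x) = x"
    using moebius_inv[OF m] by blast
  have f: "f = \<mu> \<circ> s \<circ> \<mu>i"
  proof
    fix w
    have "f w = f (\<mu> (\<mu>i w))" using mi by simp
    also have "\<dots> = \<mu> (s (\<mu>i w))" using e by (metis comp_apply)
    finally show "f w = (\<mu> \<circ> s \<circ> \<mu>i) w" by simp
  qed
  have "Deck (f ^^ 2) = (\<lambda>\<tau>. \<mu> \<circ> \<tau> \<circ> \<mu>i) ` Deck (s ^^ 2)"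
    by (rule conj_deck[OF mi(2) mi(3) m mi(1) f])
  moreover have "s ^^ 2 = F4" using s sq2 inv_sq2 by auto
  ultimately have "Deck (f ^^ 2) = (\<lambda>\<tau>. \<mu> \<circ> \<tau> \<circ> \<mu>i) ` Deck F4" by simp
  then have "cyclic_order_gt2 (Deck (f ^^ 2))" using cyclic_conj[OF mi(2) mi(3) cyclic_F4] by simp
  then show ?thesis by blast
qed

lemma invol_small:
  assumes "\<And>x. g (g x) = x"
  shows "card {g ^^ n | n. True} \<le> 2"
proof -
  have "g ^^ n \<in> {id, g}" for n
  proof (induction n)
    case 0 then show ?case by simp
  next
    case (Suc n)
    then show ?case using assms by (auto simp: fun_eq_iff)
  qed
  then have "{g ^^ n | n. True} \<subseteq> {id, g}" by blast
  then have "card {g ^^ n | n. True} \<le> card {id, g}" by (rule card_mono[rotated]) simp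
  also have "\<dots> \<le> 2" by (simp add: card_insert_if)
  finally show ?thesis .
qed

lemma sscale_fix:
  assumes "s \<noteq> 1" "sscale s w = w"
  shows "w = Some 0 \<or> w = None"
proof (cases w)
  case (Some z)
  then have "s * z = z" using assms(2) by simp
  then have "(s - 1) * z = 0" by (simp add: algebra_simps)
  then show ?thesis using assms(1) Some by simp
qed simp

lemma sq_sscale: "sq_map (sscale t w) = sscale (t^2) (sq_map w)"
  by (cases w) (simp_all add: sq_Some sq_None power_mult_distrib)

lemma mob_Some0: "mob a b c d (Some 0) = proj b d"
  by (simp add: mob_def rx_def ry_def)
lemma mob_None: "mob a b c d None = proj a c"
  by (simp add: mob_def rx_def ry_def)
lemma mob_Some: "mob a b c d (Some z) = proj (a * z+b) (c * z+d)"
  by (simp add: mob_def rx_def ry_def)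

lemma cube_root: "\<exists>r::complex. r^3 = u" 
proof (cases "u = 0")
  case True then show ?thesis by (intro exI[of _ 0]) simp
next
  case False
  have "(exp (Ln u / 3))^3 = exp (of_nat 3 * (Ln u / 3))" by (simp only: exp_of_nat_mult)
  also have "\<dots> = u" using False by simp
  finally show ?thesis by blast
qed

lemma core:
  assumes det: "a * d - b * c \<noteq> 0" and h: "h = mob a b c d \<circ> sq_map"
    and cyc: "cyclic_order_gt2 (Deck (h ^^ k))"
  shows "power_map h"
proof -
  define M where "M = mob a b c d"
  have mM: "moebius M" using det by (simp add: M_def moebius_mob)
  obtain Mi where mMi: "moebius Mi" and MMi: "\<And>x. M (Mi x) = x" and MiM: "\<And>x. Mi (M x) = x"
    using moebius_inv[OF mM] by blast
  have hM: "h w = M (sq_map w)" for w by (simp add: h M_def)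
  let ?G = "Deck (h ^^ k)"
  obtain g where gG: "g \<in> ?G" and Gg: "?G = {g ^^ n | n. True}" and fin: "finite ?G" and c2: "card ?G > 2"
    using cyc by (auto simp: cyclic_order_gt2_def)
  have notinv: "\<not> (\<forall>x. g (g x) = x)"
  proof
    assume "\<forall>x. g (g x) = x"
    then have "card ?G \<le> 2" unfolding Gg by (intro invol_small) blast
    then show False using c2 by simp
  qed
  have "k \<noteq> 0"
  proof
    assume k0: "k = 0"
    have "?G \<subseteq> {id}" using k0 by (auto simp: Deck_def)
    then have "card ?G \<le> 1" using card_mono[of "{id}" ?G] by simp
    then show False using c2 by simp
  qed
  then obtain k' where k': "k = Suc k'" by (cases k) auto
  have hk: "(h ^^ k) x = (h ^^ k') (h x)" for x by (simp add: k' funpow_Suc_right del: funpow.simps)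
  define neg where "neg = sscale (-1)"
  have hneg: "h (neg x) = h x" for x
    by (cases x) (simp_all add: hM neg_def sq_Some sq_None)
  have "neg \<in> ?G"
    unfolding Deck_def using hneg by (auto simp: neg_def moebius_scale fun_eq_iff hk)
  then obtain m where negm: "neg = g ^^ m" using Gg by blast
  have comm: "g (neg x) = neg (g x)" for x unfolding negm by (simp add: funpow_swap1)
  have fixneg: "neg w = w \<Longrightarrow> w = Some 0 \<or> w = None" for w
    unfolding neg_def by (rule sscale_fix) simp_all
  have mg: "moebius g" using gG by (simp add: Deck_def)
  obtain a' b' c' d' where dg: "a'* d' - b'* c' \<noteq> 0" and g: "g = mob a' b' c' d'"
    using mg moebius_iff by blast
  obtain gi where "\<And>x. gi (g x) = x" using moebius_inv[OF mg] by blast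
  then have ginj: "g x = g y \<Longrightarrow> x = y" for x y by metis
  have g0: "g (Some 0) = Some 0 \<or> g (Some 0) = None"
    using fixneg[of "g (Some 0)"] comm[of "Some 0"] by (simp add: neg_def)
  have gN: "g None = Some 0 \<or> g None = None"
    using fixneg[of "g None"] comm[of None] by (simp add: neg_def)
  have g0N: "g (Some 0) \<noteq> g None" using ginj by blast
  obtain t where t0: "t \<noteq> 0" and gt: "g = sscale t"
  proof (cases "g (Some 0) = Some 0")
    case True
    then have gN': "g None = None" using gN g0N by auto
    have "d' \<noteq> 0" "b' = 0" using True by (auto simp: g mob_Some0 proj_def split: if_splits)
    moreover have "c' = 0" using gN' by (auto simp: g mob_None proj_def split: if_splits)
    ultimately have "a' \<noteq> 0" "d' \<noteq> 0" "b' = 0" "c' = 0" using dg by auto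
    moreover have "g = sscale (a'/d')"
    proof
      fix w show "g w = sscale (a'/d') w"
        using \<open>d' \<noteq> 0\<close> \<open>b' = 0\<close> \<open>c' = 0\<close> by (cases w) (simp_all add: g mob_Some mob_None proj_def)
    qed
    ultimately show thesis using that[of "a'/d'"] by simp
  next
    case False
    then have g0': "g (Some 0) = None" and gN': "g None = Some 0" using g0 gN g0N by auto
    have "d' = 0" using g0' by (auto simp: g mob_Some0 proj_def split: if_splits)
    moreover have "c' \<noteq> 0" "a' = 0" using gN' by (auto simp: g mob_None proj_def split: if_splits)
    ultimately have bc: "b'* c' \<noteq> 0" "a' = 0" "d' = 0" using dg by auto
    have "g (g x) = x" for x
    proof -
      have "g \<circ> g = mob (b'* c') 0 0 (b'* c')" unfolding g using dg bc by (simp add: mob_comp algebra_simps)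
      moreover have "mob (b'* c') 0 0 (b'* c') x = x" using bc
        by (cases x) (simp_all add: mob_Some mob_None proj_def)
      ultimately show ?thesis by (metis comp_apply)
    qed
    then show thesis using notinv by blast
  qed
  have t2: "t^2 \<noteq> 1"
  proof
    assume "t^2 = 1"
    then have "g (g x) = x" for x
      using scale_comp[of t t] by (cases x) (simp_all add: gt power2_eq_square)
    then show False using notinv by blast
  qed
  define lam where "lam = M \<circ> sscale (t^2) \<circ> Mi"
  have mlam: "moebius lam" unfolding lam_def
    using mM mMi t0 by (intro moebius_comp moebius_scale) simp_all
  have hg: "h (g x) = lam (h x)" for x by (simp add: hM gt sq_sscale lam_def MiM)
  have surj: "\<exists>v. h v = w" for w
  proof (cases "Mi w")
    case None
    then have "h None = w" using MMi[of w] by (simp add: hM sq_None)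
    then show ?thesis by blast
  next
    case (Some z)
    have "h (Some (csqrt z)) = M (Some z)" by (simp add: hM sq_Some)
    also have "\<dots> = w" using Some MMi[of w] by simp
    finally show ?thesis by blast
  qed
  have gdeck: "(h ^^ k) (g x) = (h ^^ k) x" for x
    using gG by (auto simp: Deck_def fun_eq_iff)
  have e1: "(h ^^ k') (lam y) = (h ^^ k') y" for y
  proof -
    obtain x where x: "h x = y" using surj by blast
    show ?thesis using gdeck[of x] by (simp add: hk hg x[symmetric])
  qed
  have "lam \<in> ?G"
    unfolding Deck_def using mlam e1 by (auto simp: fun_eq_iff k')
  then obtain n where "lam = g ^^ n" using Gg by blast
  then have ln: "lam = sscale (t^n)" by (simp add: gt scale_pow)
  have lamM: "lam (M x) = M (sscale (t^2) x)" for x by (simp add: lam_def MiM)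
  have tn: "t^n \<noteq> 1"
  proof
    assume "t^n = 1"
    then have "lam (M (Some 1)) = M (Some 1)" by (simp add: ln scale_1)
    then have "M (Some (t^2)) = M (Some 1)" by (simp add: lamM)
    then have "Mi (M (Some (t^2))) = Mi (M (Some 1))" by simp
    then show False using t2 by (simp add: MiM)
  qed
  have "sscale (t^n) (M (Some 0)) = M (Some 0)" using lamM[of "Some 0"] by (simp add: ln)
  then have M0: "M (Some 0) = Some 0 \<or> M (Some 0) = None" by (rule sscale_fix[OF tn])
  have "sscale (t^n) (M None) = M None" using lamM[of None] by (simp add: ln)
  then have MN: "M None = Some 0 \<or> M None = None" by (rule sscale_fix[OF tn])
  have M0N: "M (Some 0) \<noteq> M None"
  proof
    assume "M (Some 0) = M None"
    then have "Mi (M (Some 0)) = Mi (M None)" by simp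
    then show False by (simp add: MiM)
  qed
  show ?thesis
  proof (cases "M (Some 0) = Some 0")
    case True
    then have MN': "M None = None" using MN M0N by auto
    have bd: "d \<noteq> 0" "b = 0" using True by (auto simp: M_def mob_Some0 proj_def split: if_splits)
    moreover have c0: "c = 0" using MN' by (auto simp: M_def mob_None proj_def split: if_splits)
    ultimately have a0: "a \<noteq> 0" using det by auto
    define \<mu> where "\<mu> = sscale (d/a)"
    have "moebius \<mu>" using a0 bd by (simp add: \<mu>_def moebius_scale)
    moreover have "h \<circ> \<mu> = \<mu> \<circ> sq_map"
    proof
      fix w show "(h \<circ> \<mu>) w = (\<mu> \<circ> sq_map) w"
        using a0 bd c0 by (cases w) (simp_all add: hM M_def \<mu>_def sq_Some sq_None mob_Some mob_None
            proj_def field_simps power2_eq_square)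
    qed
    ultimately show ?thesis unfolding power_map_def by blast
  next
    case False
    then have M0': "M (Some 0) = None" and MN': "M None = Some 0" using M0 MN M0N by auto
    have d0: "d = 0" using M0' by (auto simp: M_def mob_Some0 proj_def split: if_splits)
    moreover have "c \<noteq> 0" "a = 0" using MN' by (auto simp: M_def mob_None proj_def split: if_splits)
    ultimately have bc: "b \<noteq> 0" "c \<noteq> 0" "a = 0" "d = 0" using det by auto
    obtain r where r: "r^3 = b/c" using cube_root by blast
    then have r0: "r \<noteq> 0" using bc by auto
    have rb: "c * r^3 = b" using r bc by simp
    define \<mu> where "\<mu> = sscale r"
    have "moebius \<mu>" using r0 by (simp add: \<mu>_def moebius_scale)
    moreover have "h \<circ> \<mu> = \<mu> \<circ> inv_sq_map"
    proof
      fix w show "(h \<circ> \<mu>) w = (\<mu> \<circ> inv_sq_map) w"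
      proof (cases w)
        case None then show ?thesis using bc
          by (simp add: hM M_def \<mu>_def sq_None inv_sq_None mob_None proj_def)
      next
        case (Some z)
        show ?thesis
        proof (cases "z = 0")
          case True then show ?thesis using bc Some
            by (simp add: hM M_def \<mu>_def sq_Some inv_sq_Some mob_Some proj_def)
        next
          case False
          have "b / (c * (r^2 * z^2)) = r / z^2" using False r0 bc rb[symmetric]
            by (simp add: field_simps power2_eq_square power3_eq_cube)
          then show ?thesis using bc Some False r0
            by (simp add: hM M_def \<mu>_def sq_Some inv_sq_Some mob_Some proj_def power_mult_distrib)
        qed
      qed
    qed
    ultimately show ?thesis unfolding power_map_def by blast
  qed
qed

theorem mainTheorem13:
  fixes f :: "complex option \<Rightarrow> complex option"
  assumes "quadratic_map f"
  shows "(\<exists>k::nat. cyclic_order_gt2 (Deck (f ^^ k))) \<longleftrightarrow> power_map f"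
proof
  assume "\<exists>k::nat. cyclic_order_gt2 (Deck (f ^^ k))"
  then obtain k where cyc: "cyclic_order_gt2 (Deck (f ^^ k))" by blast
  obtain a b c d n1 n2 n3 n4 where dt: "a * d - b * c \<noteq> 0" "n1 * n4 - n2 * n3 \<noteq> 0"
    and f: "f = mob n1 n2 n3 n4 \<circ> sq_map \<circ> mob a b c d"
    using quad_decomp[OF assms] by blast
  define \<nu> where "\<nu> = mob a b c d"
  have m\<nu>: "moebius \<nu>" using dt by (simp add: \<nu>_def moebius_mob)
  obtain \<nu>i where m\<nu>i: "moebius \<nu>i" and A: "\<And>x. \<nu> (\<nu>i x) = x" and B: "\<And>x. \<nu>i (\<nu> x) = x"
    using moebius_inv[OF m\<nu>] by blast
  have "moebius (\<nu> \<circ> mob n1 n2 n3 n4)" using m\<nu> dt by (intro moebius_comp moebius_mob)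
  then obtain a' b' c' d' where d': "a'* d' - b'* c' \<noteq> 0" and e: "\<nu> \<circ> mob n1 n2 n3 n4 = mob a' b' c' d'"
    using moebius_iff by blast
  define h where "h = mob a' b' c' d' \<circ> sq_map"
  have hf: "h = \<nu> \<circ> f \<circ> \<nu>i"
  proof
    fix w
    have "h w = \<nu> (mob n1 n2 n3 n4 (sq_map w))" by (simp add: h_def e[symmetric])
    also have "\<dots> = (\<nu> \<circ> f \<circ> \<nu>i) w" by (simp add: f \<nu>_def[symmetric] A)
    finally show "h w = (\<nu> \<circ> f \<circ> \<nu>i) w" .
  qed
  have "Deck (h ^^ k) = (\<lambda>\<tau>. \<nu> \<circ> \<tau> \<circ> \<nu>i) ` Deck (f ^^ k)"
    by (rule conj_deck[OF A B m\<nu> m\<nu>i hf])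
  then have "cyclic_order_gt2 (Deck (h ^^ k))" using cyclic_conj[OF A B cyc] by simp
  then have ph: "power_map h" by (rule core[OF d' h_def])
  have fh: "f = \<nu>i \<circ> h \<circ> \<nu>" by (simp add: hf fun_eq_iff B)
  show "power_map f" by (rule power_map_conj[OF B A m\<nu>i fh ph])
next
  assume "power_map f"
  then show "\<exists>k::nat. cyclic_order_gt2 (Deck (f ^^ k))" by (rule power_imp_cyclic)
qed

end
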